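(* Throw $m$ balls independently into $n$ bins, where each ball lands in bin $i$ with probability $p_i$ ($\sum_{i=1}^n p_i=1$), and let $L$ be the maximum number of balls in a single bin. If $m\in\Omega(n/\mathrm{polylog}\,n)$, then $L\in\Omega\left(\frac{\log n}{\log\log n}\right)$ asymptotically almost surely.
   Context: "Asymptotically almost surely" means with probability tending to $1$ as $n\to\infty$; $\mathrm{polylog}\,n$ denotes $(\log n)^{O(1)}$. *)

theory Defs
  imports "HOL-Probability.Probability"
begin

definition ball_pmf :: "nat \<Rightarrow> (nat \<Rightarrow> real) \<Rightarrow> nat pmf" where
  "ball_pmf n p = embed_pmf (\<lambda>i. if i < n then p i else 0)"

text \<open>m independent balls: outcome f j = bin of ball j (j < m).\<close>
definition throws :: "nat \<Rightarrow> nat \<Rightarrow> (nat \<Rightarrow> real) \<Rightarrow> (nat \<Rightarrow> nat) pmf" where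
  "throws m n p = Pi_pmf {..<m} 0 (\<lambda>_. ball_pmf n p)"

definition max_load :: "nat \<Rightarrow> nat \<Rightarrow> (nat \<Rightarrow> nat) \<Rightarrow> nat" where
  "max_load m n f = Max ((\<lambda>i. card {j \<in> {..<m}. f j = i}) ` {..<n})"

end

theory Submission
  imports Defs "HOL-Real_Asymp.Real_Asymp"
begin


lemma pmf_ball:
  assumes nn: "\<And>i. i < n \<Longrightarrow> p i \<ge> 0" and s: "(\<Sum>i<n. p i) = 1"
  shows "pmf (ball_pmf n p) i = (if i < n then p i else 0)"
proof -
  let ?q = "\<lambda>i. if i < n then p i else 0"
  have nn': "\<And>x. 0 \<le> ?q x" using nn by auto
  have "(\<integral>\<^sup>+x. ennreal (?q x) \<partial>count_space UNIV) = (\<integral>\<^sup>+x. ennreal (?q x) * indicator {..<n} x \<partial>count_space UNIV)"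
    by (intro nn_integral_cong) (auto simp: indicator_def)
  also have "\<dots> = (\<integral>\<^sup>+x. ennreal (?q x) \<partial>count_space {..<n})"
    by (simp add: nn_integral_count_space_indicator)
  also have "\<dots> = (\<Sum>x<n. ennreal (?q x))"
    by (simp add: nn_integral_count_space_finite)
  also have "\<dots> = ennreal (\<Sum>x<n. ?q x)"
    using nn by (intro sum_ennreal) auto
  also have "(\<Sum>x<n. ?q x) = 1" using s by simp
  finally have "(\<integral>\<^sup>+x. ennreal (?q x) \<partial>count_space UNIV) = 1" by simp
  then show ?thesis unfolding ball_pmf_def using nn' by (subst pmf_embed_pmf) auto
qed

lemma prob_throws:
  assumes "U \<subseteq> {..<m}"
  shows "measure_pmf.prob (throws m n p) {f. \<forall>b\<in>U. f b \<in> B b} = (\<Prod>b\<in>U. measure_pmf.prob (ball_pmf n p) (B b))"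
proof -
  have "{f. \<forall>b\<in>U. f b \<in> B b} = Pi {..<m} (\<lambda>b. if b \<in> U then B b else UNIV)"
    using assms by (auto simp: Pi_def)
  hence "measure_pmf.prob (throws m n p) {f. \<forall>b\<in>U. f b \<in> B b} =
     (\<Prod>b\<in>{..<m}. measure_pmf.prob (ball_pmf n p) (if b \<in> U then B b else UNIV))"
    unfolding throws_def by (simp add: measure_Pi_pmf_Pi)
  also have "\<dots> = (\<Prod>b\<in>U. measure_pmf.prob (ball_pmf n p) (B b))"
    using assms by (intro prod.mono_neutral_cong_right) auto
  finally show ?thesis .
qed



lemma second_moment:
  fixes M :: "'a pmf" and E :: "'i \<Rightarrow> 'a set"
  assumes fin: "finite I" and mu: "\<mu> = (\<Sum>a\<in>I. measure_pmf.prob M (E a))" and mupos: "\<mu> > 0"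
   and V: "(\<Sum>a\<in>I. \<Sum>b\<in>I. measure_pmf.prob M (E a \<inter> E b)) \<le> \<mu>\<^sup>2 + V"
  shows "measure_pmf.prob M {x. \<forall>a\<in>I. x \<notin> E a} \<le> V / \<mu>\<^sup>2"
proof -
  define X where "X x = (\<Sum>a\<in>I. indicator (E a) x :: real)" for x
  define Z where "Z = {x. \<forall>a\<in>I. x \<notin> E a}"
  have ind: "integrable (measure_pmf M) (indicator A :: 'a \<Rightarrow> real)" for A
    by (rule integrable_real_indicator) (auto simp: less_top[symmetric])
  have intX: "integrable M X" unfolding X_def[abs_def] using ind by (intro Bochner_Integration.integrable_sum) auto
  have EX: "measure_pmf.expectation M X = \<mu>"
    unfolding X_def[abs_def] mu using ind by (subst Bochner_Integration.integral_sum) auto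
  have X2: "(X x)\<^sup>2 = (\<Sum>a\<in>I. \<Sum>b\<in>I. indicator (E a \<inter> E b) x)" for x
    unfolding X_def power2_eq_square sum_product
    by (intro sum.cong refl) (simp add: indicator_inter_arith)
  have intX2: "integrable M (\<lambda>x. (X x)\<^sup>2)" unfolding X2 using ind
    by (intro Bochner_Integration.integrable_sum) auto
  have EX2: "measure_pmf.expectation M (\<lambda>x. (X x)\<^sup>2) = (\<Sum>a\<in>I. \<Sum>b\<in>I. measure_pmf.prob M (E a \<inter> E b))"
    unfolding X2 using ind by (simp add: Bochner_Integration.integral_sum)
  have eq: "(\<lambda>x. (X x - \<mu>)\<^sup>2) = (\<lambda>x. (X x)\<^sup>2 - (2*\<mu>* X x - \<mu>\<^sup>2))"
    by (auto simp: power2_eq_square algebra_simps)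
  have intV: "integrable M (\<lambda>x. (X x - \<mu>)\<^sup>2)" unfolding eq using intX intX2 by auto
  have EV: "measure_pmf.expectation M (\<lambda>x. (X x - \<mu>)\<^sup>2) = measure_pmf.expectation M (\<lambda>x. (X x)\<^sup>2) - \<mu>\<^sup>2"
    unfolding eq using intX intX2 EX by (simp add: power2_eq_square)
  have pt: "\<mu>\<^sup>2 * indicator Z x \<le> (X x - \<mu>)\<^sup>2" for x
  proof (cases "x \<in> Z")
    case True
    hence "X x = 0" unfolding X_def Z_def by (auto intro!: sum.neutral)
    thus ?thesis using True by simp
  qed simp
  have "\<mu>\<^sup>2 * measure_pmf.prob M Z = measure_pmf.expectation M (\<lambda>x. \<mu>\<^sup>2 * indicator Z x)"
    by simp
  also have "\<dots> \<le> measure_pmf.expectation M (\<lambda>x. (X x - \<mu>)\<^sup>2)"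
    using pt intV ind by (intro integral_mono) auto
  also have "\<dots> \<le> V" using EV EX2 V by simp
  finally have "\<mu>\<^sup>2 * measure_pmf.prob M Z \<le> V" .
  thus ?thesis unfolding Z_def using mupos by (simp add: field_simps)
qed



lemma probE:
  assumes nn: "\<And>i. i < n \<Longrightarrow> p i \<ge> 0" and s: "(\<Sum>i<n. p i) = 1"
    and T: "T \<subseteq> {..<m}" and i: "i < n"
  shows "measure_pmf.prob (throws m n p) {f. \<forall>b\<in>T. f b \<in> {i}} = p i ^ card T"
  using prob_throws[OF T, of n p "\<lambda>_. {i}"] pmf_ball[OF nn s] i
  by (simp add: measure_pmf_single)

lemma probEE:
  assumes nn: "\<And>i. i < n \<Longrightarrow> p i \<ge> 0" and s: "(\<Sum>i<n. p i) = 1"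
    and T: "T \<subseteq> {..<m}" and T': "T' \<subseteq> {..<m}" and i: "i < n" and i': "i' < n"
  shows "measure_pmf.prob (throws m n p) ({f. \<forall>b\<in>T. f b \<in> {i}} \<inter> {f. \<forall>b\<in>T'. f b \<in> {i'}})
     \<le> p i ^ card T * p i' ^ card T' + (if T \<inter> T' \<noteq> {} \<and> i = i' then p i ^ card T * p i ^ card (T' - T) else 0)"
proof -
  have fT: "finite T" "finite T'" using T T' finite_subset by blast+
  have pos: "0 \<le> p i ^ card T * p i' ^ card T'" using nn i i' by simp
  show ?thesis
  proof (cases "T \<inter> T' = {}")
    case True
    have eq: "{f. \<forall>b\<in>T. f b \<in> {i}} \<inter> {f. \<forall>b\<in>T'. f b \<in> {i'}} =
       {f. \<forall>b\<in>T \<union> T'. f b \<in> (if b \<in> T then {i} else {i'})}" using True by auto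
    have "measure_pmf.prob (throws m n p) ({f. \<forall>b\<in>T. f b \<in> {i}} \<inter> {f. \<forall>b\<in>T'. f b \<in> {i'}})
       = (\<Prod>b\<in>T \<union> T'. measure_pmf.prob (ball_pmf n p) (if b \<in> T then {i} else {i'}))"
      unfolding eq using T T' by (intro prob_throws) auto
    also have "\<dots> = (\<Prod>b\<in>T. measure_pmf.prob (ball_pmf n p) (if b \<in> T then {i} else {i'})) *
        (\<Prod>b\<in>T'. measure_pmf.prob (ball_pmf n p) (if b \<in> T then {i} else {i'}))"
      using True fT by (intro prod.union_disjoint) auto
    also have "\<dots> = (\<Prod>b\<in>T. p i) * (\<Prod>b\<in>T'. p i')"
      using True pmf_ball[OF nn s] i i' by (intro arg_cong2[where f="(*)"] prod.cong)
        (auto simp: measure_pmf_single)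
    finally show ?thesis using True by simp
  next
    case False
    show ?thesis
    proof (cases "i = i'")
      case True
      have eq: "{f. \<forall>b\<in>T. f b \<in> {i}} \<inter> {f. \<forall>b\<in>T'. f b \<in> {i'}} = {f. \<forall>b\<in>T \<union> T'. f b \<in> {i}}"
        using True by auto
      have c: "card (T \<union> T') = card T + card (T' - T)"
      proof -
        have "T \<union> T' = T \<union> (T' - T)" by auto
        moreover have "card (T \<union> (T' - T)) = card T + card (T' - T)"
          by (rule card_Un_disjoint) (use fT in auto)
        ultimately show ?thesis by simp
      qed
      have "measure_pmf.prob (throws m n p) ({f. \<forall>b\<in>T. f b \<in> {i}} \<inter> {f. \<forall>b\<in>T'. f b \<in> {i'}})
          = p i ^ card T * p i ^ card (T' - T)"
        unfolding eq using probE[OF nn s _ i, of "T \<union> T'" m] T T' c by (simp add: power_add)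
      thus ?thesis using False True pos by simp
    next
      case ne: False
      have eq: "{f. \<forall>b\<in>T. f b \<in> {i}} \<inter> {f. \<forall>b\<in>T'. f b \<in> {i'}} = {}"
        using False ne by auto
      show ?thesis unfolding eq using pos nn i by auto
    qed
  qed
qed

lemma overlap_sum:
  fixes x :: real
  assumes T: "T \<subseteq> {..<m}" and cT: "card T = t" and x: "0 \<le> x"
  shows "(\<Sum>T'\<in>{T'\<in>Pow {..<m}. card T' = t \<and> T \<inter> T' \<noteq> {}}. x ^ card (T' - T))
     \<le> 2 ^ t * (\<Sum>r<t. real (m choose r) * x ^ r)"
proof -
  define A where "A = {T'\<in>Pow {..<m}. card T' = t \<and> T \<inter> T' \<noteq> {}}"
  define S where "S = {R\<in>Pow {..<m}. card R < t}"
  define \<phi> where "\<phi> T' = (T' \<inter> T, T' - T)" for T'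
  have fT: "finite T" using T finite_subset by blast
  have finA: "finite A" unfolding A_def by auto
  have finS: "finite S" unfolding S_def by auto
  have inj: "inj_on \<phi> A"
  proof (rule inj_onI)
    fix X Y assume "X \<in> A" "Y \<in> A" "\<phi> X = \<phi> Y"
    hence "X \<inter> T = Y \<inter> T" "X - T = Y - T" unfolding \<phi>_def by auto
    thus "X = Y" by blast
  qed
  have img: "\<phi> ` A \<subseteq> Pow T \<times> S"
  proof
    fix z assume "z \<in> \<phi> ` A"
    then obtain T' where T'A: "T' \<in> A" and z: "z = \<phi> T'" by auto
    have fT': "finite T'" using T'A unfolding A_def by (auto intro: finite_subset)
    have "T' - T \<subset> T'" using T'A unfolding A_def by auto
    hence "card (T' - T) < card T'" using fT' by (intro psubset_card_mono) auto
    thus "z \<in> Pow T \<times> S" using T'A z unfolding \<phi>_def A_def S_def by auto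
  qed
  have "(\<Sum>T'\<in>A. x ^ card (T' - T)) = (\<Sum>z\<in>\<phi> ` A. x ^ card (snd z))"
    unfolding sum.reindex[OF inj] comp_def \<phi>_def by simp
  also have "\<dots> \<le> (\<Sum>z\<in>Pow T \<times> S. x ^ card (snd z))"
    using img finS fT x by (intro sum_mono2) auto
  also have "\<dots> = (\<Sum>a\<in>Pow T. \<Sum>R\<in>S. x ^ card R)"
    unfolding sum.cartesian_product by (simp add: split_beta)
  also have "\<dots> = 2 ^ t * (\<Sum>R\<in>S. x ^ card R)"
    using fT cT by (simp add: card_Pow)
  also have "(\<Sum>R\<in>S. x ^ card R) = (\<Sum>r<t. \<Sum>R\<in>{R\<in>S. card R = r}. x ^ card R)"
    using finS by (intro sum.group[symmetric]) (auto simp: S_def)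
  also have "\<dots> = (\<Sum>r<t. real (m choose r) * x ^ r)"
  proof (intro sum.cong refl)
    fix r assume r: "r \<in> {..<t}"
    have "{R\<in>S. card R = r} = {K\<in>Pow {..<m}. card K = r}" using r unfolding S_def by auto
    hence "card {R\<in>S. card R = r} = m choose r" by (simp add: n_subsets)
    thus "(\<Sum>R\<in>{R\<in>S. card R = r}. x ^ card R) = real (m choose r) * x ^ r"
      by simp
  qed
  finally show ?thesis unfolding A_def .
qed



lemma pm_step:
  assumes nn: "\<And>i. i < n \<Longrightarrow> p i \<ge> (0::real)" and s: "(\<Sum>i<n. p i) = 1"
  shows "(\<Sum>i<n. p i ^ t) \<le> real n * (\<Sum>i<n. p i ^ Suc t)"
proof -
  let ?a = "\<lambda>i. p i ^ t"
  have pt: "0 \<le> (?a i - ?a j) * (p i - p j)" if "i < n" "j < n" for i j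
  proof (cases "p j \<le> p i")
    case True
    hence "?a j \<le> ?a i" using nn that by (intro power_mono) auto
    thus ?thesis using True by simp
  next
    case False
    hence "?a i \<le> ?a j" using nn that by (intro power_mono) auto
    thus ?thesis using False by (simp add: mult_nonpos_nonpos)
  qed
  have "0 \<le> (\<Sum>i<n. \<Sum>j<n. (?a i - ?a j) * (p i - p j))"
    using pt by (intro sum_nonneg) auto
  also have "\<dots> = (\<Sum>i<n. \<Sum>j<n. (?a i * p i + ?a j * p j) - (?a i * p j + ?a j * p i))"
    by (intro sum.cong refl) (simp add: algebra_simps)
  also have "\<dots> = 2 * real n * (\<Sum>i<n. ?a i * p i) - 2 * (\<Sum>i<n. ?a i) * (\<Sum>i<n. p i)"
  proof -
    have 1: "(\<Sum>i<n. \<Sum>j<n. (?a i * p i + ?a j * p j)) = 2 * real n * (\<Sum>i<n. ?a i * p i)"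
      by (simp add: sum.distrib sum_distrib_left mult.assoc)
    have 2: "(\<Sum>i<n. \<Sum>j<n. (?a i * p j + ?a j * p i)) = 2 * (\<Sum>i<n. ?a i) * (\<Sum>i<n. p i)"
    proof -
      have a: "(\<Sum>i<n. \<Sum>j<n. ?a i * p j) = (\<Sum>i<n. ?a i) * (\<Sum>i<n. p i)" by (simp add: sum_product)
      have b: "(\<Sum>i<n. \<Sum>j<n. ?a j * p i) = (\<Sum>i<n. ?a i) * (\<Sum>i<n. p i)"
        by (subst sum.swap) (simp add: sum_product)
      show ?thesis by (simp add: sum.distrib a b)
    qed
    show ?thesis by (simp only: sum_subtractf 1 2)
  qed
  finally show ?thesis using s by (simp add: mult.commute)
qed

lemma pm:
  assumes nn: "\<And>i. i < n \<Longrightarrow> p i \<ge> (0::real)" and s: "(\<Sum>i<n. p i) = 1" and t: "1 \<le> t"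
  shows "1 \<le> (\<Sum>i<n. p i ^ t) * real n ^ (t - 1)"
  using t
proof (induction t rule: dec_induct)
  case base thus ?case using s by simp
next
  case (step k)
  have "1 \<le> (\<Sum>i<n. p i ^ k) * real n ^ (k - 1)" by fact
  also have "\<dots> \<le> real n * (\<Sum>i<n. p i ^ Suc k) * real n ^ (k - 1)"
    using pm_step[OF nn s, of k] by (intro mult_right_mono) auto
  also have "\<dots> = (\<Sum>i<n. p i ^ Suc k) * real n ^ (Suc k - 1)"
    using step(1) by (cases k) (auto simp: algebra_simps)
  finally show ?case .
qed



lemma caseB:
  assumes nn: "\<And>i. i < n \<Longrightarrow> p i \<ge> 0" and s: "(\<Sum>i<n. p i) = 1"
    and t1: "1 \<le> t" and tm: "t \<le> m" and small: "\<And>i. i < n \<Longrightarrow> real m * p i \<le> \<theta>" and th: "1 \<le> \<theta>"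
  shows "measure_pmf.prob (throws m n p)
     {f. \<forall>a\<in>{T\<in>Pow {..<m}. card T = t} \<times> {..<n}. f \<notin> (case a of (T, i) \<Rightarrow> {f. \<forall>b\<in>T. f b \<in> {i}})}
     \<le> 2 ^ t * real t * \<theta> ^ t / (real (m choose t) * (\<Sum>i<n. p i ^ t))"
proof -
  define \<T> where "\<T> = {T\<in>Pow {..<m}. card T = t}"
  define I where "I = \<T> \<times> {..<n}"
  define E where "E = (\<lambda>a. case a of (T, i) \<Rightarrow> {f::nat\<Rightarrow>nat. \<forall>b\<in>T. f b \<in> {i}})"
  define S where "S = (\<Sum>i<n. p i ^ t)"
  define \<mu> where "\<mu> = real (m choose t) * S"
  define B where "B = 2 ^ t * real t * \<theta> ^ t"
  define P where "P a = measure_pmf.prob (throws m n p) (E a)" for a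
  have finT: "finite \<T>" unfolding \<T>_def by auto
  have finI: "finite I" unfolding I_def using finT by auto
  have "1 \<le> S * real n ^ (t - 1)" unfolding S_def by (rule pm[OF nn s t1])
  moreover have "S \<ge> 0" unfolding S_def using nn by (intro sum_nonneg) auto
  ultimately have Spos: "S > 0" by (cases "S = 0") auto
  have cpos: "real (m choose t) > 0" using tm by simp
  have mupos: "\<mu> > 0" unfolding \<mu>_def using Spos cpos by simp
  have cardT: "card \<T> = m choose t" unfolding \<T>_def by (simp add: n_subsets)
  have PE: "P (T, i) = p i ^ t" if "(T, i) \<in> I" for T i
    using that probE[OF nn s, of T m i] unfolding P_def E_def I_def \<T>_def by auto
  have mu: "\<mu> = (\<Sum>a\<in>I. P a)"
  proof -
    have "(\<Sum>a\<in>I. P a) = (\<Sum>T\<in>\<T>. \<Sum>i<n. P (T, i))"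
      unfolding I_def by (simp add: sum.cartesian_product)
    also have "\<dots> = (\<Sum>T\<in>\<T>. S)" unfolding S_def
      by (intro sum.cong refl) (auto simp: PE I_def)
    finally show ?thesis unfolding \<mu>_def using cardT by simp
  qed
  define h where "h (T::nat set) i T' = p i ^ t * p i ^ card (T' - T)" for T i T'
  have pair: "measure_pmf.prob (throws m n p) (E a \<inter> E b) \<le> P a * P b +
      (case a of (T, i) \<Rightarrow> case b of (T', i') \<Rightarrow> if T \<inter> T' \<noteq> {} \<and> i = i' then h T i T' else 0)"
    if "a \<in> I" "b \<in> I" for a b
  proof -
    obtain T i T' i' where ab: "a = (T, i)" "b = (T', i')" by (cases a, cases b) auto
    have *: "T \<subseteq> {..<m}" "T' \<subseteq> {..<m}" "i < n" "i' < n" "card T = t" "card T' = t"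
      using that ab unfolding I_def \<T>_def by auto
    have eq: "E a \<inter> E b = {f. \<forall>b\<in>T. f b \<in> {i}} \<inter> {f. \<forall>b\<in>T'. f b \<in> {i'}}"
      unfolding E_def ab by simp
    have Pa: "P a = p i ^ t" "P b = p i' ^ t" using PE that ab by auto
    have H: "measure_pmf.prob (throws m n p) ({f. \<forall>b\<in>T. f b \<in> {i}} \<inter> {f. \<forall>b\<in>T'. f b \<in> {i'}})
     \<le> p i ^ t * p i' ^ t + (if T \<inter> T' \<noteq> {} \<and> i = i' then p i ^ t * p i ^ card (T' - T) else 0)"
      using probEE[OF nn s *(1-4)] by (simp only: *(5,6))
    show ?thesis unfolding eq Pa using H by (simp only: ab prod.case h_def)
  qed
  have W: "(\<Sum>b\<in>I. case b of (T', i') \<Rightarrow> if T \<inter> T' \<noteq> {} \<and> i = i' then h T i T' else 0) \<le> p i ^ t * B"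
    if "(T, i) \<in> I" for T :: "nat set" and i
  proof -
    have T: "T \<subseteq> {..<m}" "card T = t" "i < n" using that unfolding I_def \<T>_def by auto
    have pi0: "0 \<le> p i" using nn T by simp
    have "(\<Sum>b\<in>I. case b of (T', i') \<Rightarrow> if T \<inter> T' \<noteq> {} \<and> i = i' then h T i T' else 0)
       = (\<Sum>T'\<in>\<T>. \<Sum>i'<n. if i = i' then (if T \<inter> T' \<noteq> {} then h T i T' else 0) else 0)"
      unfolding I_def sum.cartesian_product[symmetric] by (intro sum.cong refl) auto
    also have "\<dots> = (\<Sum>T'\<in>\<T>. if T \<inter> T' \<noteq> {} then h T i T' else 0)"
      using T by simp
    also have "\<dots> = (\<Sum>T'\<in>{T'\<in>\<T>. T \<inter> T' \<noteq> {}}. h T i T')"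
      using finT by (simp add: sum.inter_filter)
    also have "\<dots> = p i ^ t * (\<Sum>T'\<in>{T'\<in>Pow {..<m}. card T' = t \<and> T \<inter> T' \<noteq> {}}. p i ^ card (T' - T))"
      unfolding h_def \<T>_def by (simp add: sum_distrib_left conj_assoc)
    also have "\<dots> \<le> p i ^ t * (2 ^ t * (\<Sum>r<t. real (m choose r) * p i ^ r))"
      using overlap_sum[OF T(1,2) pi0] pi0 by (intro mult_left_mono) auto
    also have "(\<Sum>r<t. real (m choose r) * p i ^ r) \<le> (\<Sum>r<t. \<theta> ^ t)"
    proof (intro sum_mono)
      fix r assume r: "r \<in> {..<t}"
      have "real (m choose r) \<le> real m ^ r" using r tm binomial_le_pow[of r m]
        by (metis le_trans lessThan_iff less_imp_le of_nat_le_iff of_nat_power)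
      hence "real (m choose r) * p i ^ r \<le> real m ^ r * p i ^ r"
        using pi0 by (intro mult_right_mono) auto
      also have "\<dots> = (real m * p i) ^ r" by (simp add: power_mult_distrib)
      also have "\<dots> \<le> \<theta> ^ r" using small[OF T(3)] pi0 by (intro power_mono) auto
      also have "\<dots> \<le> \<theta> ^ t" using r th by (intro power_increasing) auto
      finally show "real (m choose r) * p i ^ r \<le> \<theta> ^ t" .
    qed
    hence "p i ^ t * (2 ^ t * (\<Sum>r<t. real (m choose r) * p i ^ r)) \<le> p i ^ t * (2 ^ t * (\<Sum>r<t. \<theta> ^ t))"
      using pi0 by (intro mult_left_mono) auto
    also have "\<dots> = p i ^ t * B" unfolding B_def by (simp add: algebra_simps)
    finally show ?thesis .
  qed
  have EXT: "(\<Sum>a\<in>I. \<Sum>b\<in>I.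
      (case a of (T, i) \<Rightarrow> case b of (T', i') \<Rightarrow> if T \<inter> T' \<noteq> {} \<and> i = i' then h T i T' else 0))
      \<le> (\<Sum>a\<in>I. B * P a)"
  proof (intro sum_mono)
    fix a assume a: "a \<in> I"
    obtain T i where ai: "a = (T, i)" by (cases a) auto
    show "(\<Sum>b\<in>I. case a of (T, i) \<Rightarrow> case b of (T', i') \<Rightarrow> if T \<inter> T' \<noteq> {} \<and> i = i' then h T i T' else 0) \<le> B * P a"
      using W[of T i] a ai PE[of T i] by (simp add: mult.commute)
  qed
  have "(\<Sum>a\<in>I. \<Sum>b\<in>I. measure_pmf.prob (throws m n p) (E a \<inter> E b))
      \<le> (\<Sum>a\<in>I. \<Sum>b\<in>I. P a * P b +
      (case a of (T, i) \<Rightarrow> case b of (T', i') \<Rightarrow> if T \<inter> T' \<noteq> {} \<and> i = i' then h T i T' else 0))"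
    using pair by (intro sum_mono) auto
  also have "\<dots> = (\<Sum>a\<in>I. \<Sum>b\<in>I. P a * P b) + (\<Sum>a\<in>I. \<Sum>b\<in>I.
      (case a of (T, i) \<Rightarrow> case b of (T', i') \<Rightarrow> if T \<inter> T' \<noteq> {} \<and> i = i' then h T i T' else 0))"
    by (simp add: sum.distrib)
  finally have S1: "(\<Sum>a\<in>I. \<Sum>b\<in>I. measure_pmf.prob (throws m n p) (E a \<inter> E b)) \<le> (\<Sum>a\<in>I. \<Sum>b\<in>I. P a * P b) + (\<Sum>a\<in>I. \<Sum>b\<in>I. (case a of (T, i) \<Rightarrow> case b of (T', i') \<Rightarrow> if T \<inter> T' \<noteq> {} \<and> i = i' then h T i T' else 0))" .
  have MU2: "(\<Sum>a\<in>I. \<Sum>b\<in>I. P a * P b) = \<mu>\<^sup>2" unfolding mu power2_eq_square sum_product ..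

  have BM: "(\<Sum>a\<in>I. B * P a) = B * \<mu>" unfolding mu by (simp add: sum_distrib_left)
  have V: "(\<Sum>a\<in>I. \<Sum>b\<in>I. measure_pmf.prob (throws m n p) (E a \<inter> E b)) \<le> \<mu>\<^sup>2 + B * \<mu>" using S1 MU2 BM EXT by linarith
  have "measure_pmf.prob (throws m n p) {x. \<forall>a\<in>I. x \<notin> E a} \<le> B * \<mu> / \<mu>\<^sup>2"
    by (rule second_moment[OF finI _ mupos V]) (simp add: mu P_def)
  also have "\<dots> = B / \<mu>" using mupos by (simp add: power2_eq_square)
  finally show ?thesis unfolding B_def \<mu>_def S_def I_def \<T>_def E_def .
qed



lemma caseA:
  assumes nn: "\<And>i. i < n \<Longrightarrow> p i \<ge> 0" and s: "(\<Sum>i<n. p i) = 1"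
    and i0: "i0 < n" and t1: "1 \<le> t"
  shows "measure_pmf.prob (throws m n p) {f. \<not> t \<le> card {j\<in>{..<m}. f j = i0}}
     \<le> real t * (1 - p i0) ^ (m div t)"
proof -
  define s where "s = m div t"
  define G where "G g = {g * s ..< Suc g * s}" for g
  have Gsub: "G g \<subseteq> {..<m}" if "g < t" for g
  proof -
    have "Suc g * s \<le> t * s" using that by (intro mult_right_mono) auto
    also have "t * s \<le> m" unfolding s_def by (simp add: mult.commute)
    finally show ?thesis unfolding G_def by auto
  qed
  have cardG: "card (G g) = s" for g unfolding G_def by simp
  have sub: "{f. \<not> t \<le> card {j\<in>{..<m}. f j = i0}} \<subseteq> (\<Union>g\<in>{..<t}. {f. \<forall>b\<in>G g. f b \<in> UNIV - {i0}})"
  proof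
    fix f assume f: "f \<in> {f. \<not> t \<le> card {j\<in>{..<m}. f j = i0}}"
    show "f \<in> (\<Union>g\<in>{..<t}. {f. \<forall>b\<in>G g. f b \<in> UNIV - {i0}})"
    proof (rule ccontr)
      assume "\<not> ?thesis"
      hence hit: "\<forall>g<t. \<exists>b\<in>G g. f b = i0" by auto
      define c where "c g = (SOME b. b \<in> G g \<and> f b = i0)" for g
      have c: "c g \<in> G g \<and> f (c g) = i0" if "g < t" for g
        unfolding c_def using hit that by (metis (mono_tags, lifting) someI_ex)
      have inj: "inj_on c {..<t}"
      proof (rule inj_onI)
        fix g g' assume g: "g \<in> {..<t}" "g' \<in> {..<t}" "c g = c g'"
        have "c g \<in> G g" "c g \<in> G g'" using c[of g] c[of g'] g by auto
        hence a: "g * s < Suc g' * s" "g' * s < Suc g * s" unfolding G_def by auto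
        have "g < Suc g'" using a(1) by (metis mult_less_cancel2)
        moreover have "g' < Suc g" using a(2) by (metis mult_less_cancel2)
        ultimately show "g = g'" by simp
      qed
      have "c ` {..<t} \<subseteq> {j\<in>{..<m}. f j = i0}" using c Gsub by auto
      hence "card (c ` {..<t}) \<le> card {j\<in>{..<m}. f j = i0}" by (intro card_mono) auto
      hence "t \<le> card {j\<in>{..<m}. f j = i0}" using card_image[OF inj] by simp
      thus False using f by simp
    qed
  qed
  have pc: "measure_pmf.prob (ball_pmf n p) (UNIV - {i0}) = 1 - p i0"
    using measure_pmf.prob_compl[of "{i0}" "ball_pmf n p"] pmf_ball[OF nn s, of i0] i0
    by (simp add: measure_pmf_single)
  have "measure_pmf.prob (throws m n p) {f. \<not> t \<le> card {j\<in>{..<m}. f j = i0}}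
     \<le> measure_pmf.prob (throws m n p) (\<Union>g\<in>{..<t}. {f. \<forall>b\<in>G g. f b \<in> UNIV - {i0}})"
    using sub by (intro measure_pmf.finite_measure_mono) auto
  also have "\<dots> \<le> (\<Sum>g<t. measure_pmf.prob (throws m n p) {f. \<forall>b\<in>G g. f b \<in> UNIV - {i0}})"
    by (intro measure_pmf.finite_measure_subadditive_finite) auto
  also have "\<dots> = (\<Sum>g<t. (1 - p i0) ^ s)"
  proof (intro sum.cong refl)
    fix g assume "g \<in> {..<t}"
    hence "G g \<subseteq> {..<m}" using Gsub by auto
    from prob_throws[OF this, of n p "\<lambda>_. UNIV - {i0}"]
    show "measure_pmf.prob (throws m n p) {f. \<forall>b\<in>G g. f b \<in> UNIV - {i0}} = (1 - p i0) ^ s"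
      by (simp only: pc cardG prod_constant)
  qed
  finally show ?thesis unfolding s_def by simp
qed



lemma card_le_max_load:
  assumes "i < n"
  shows "card {j\<in>{..<m}. f j = i} \<le> max_load m n f"
  unfolding max_load_def using assms by (intro Max_ge) auto

lemma per_n:
  assumes nn: "\<And>i. i < n \<Longrightarrow> p i \<ge> 0" and s: "(\<Sum>i<n. p i) = 1"
    and t1: "1 \<le> t" and tm: "t * t \<le> m"
  shows "measure_pmf.prob (throws m n p) {f. \<not> t \<le> max_load m n f}
     \<le> real t * exp (1 - real t) + real t * (2 * real t ^ 3 * real n / real m) ^ t / real n"
proof -
  have n0: "n > 0" using s by (cases n) auto
  have tm': "t \<le> m" using tm t1 by (metis le_trans mult_le_mono1 nat_mult_1)
  have m0: "m > 0" using tm' t1 by simp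
  have b1: "0 \<le> real t * exp (1 - real t)" by simp
  have b2: "0 \<le> real t * (2 * real t ^ 3 * real n / real m) ^ t / real n" by simp
  show ?thesis
  proof (cases "\<exists>i0<n. real m * p i0 > real t ^ 2")
    case True
    then obtain i0 where i0: "i0 < n" "real m * p i0 > real t ^ 2" by auto
    have "{f. \<not> t \<le> max_load m n f} \<subseteq> {f. \<not> t \<le> card {j\<in>{..<m}. f j = i0}}"
      using card_le_max_load[OF i0(1)] by (auto intro: le_trans)
    hence "measure_pmf.prob (throws m n p) {f. \<not> t \<le> max_load m n f}
       \<le> measure_pmf.prob (throws m n p) {f. \<not> t \<le> card {j\<in>{..<m}. f j = i0}}"
      by (intro measure_pmf.finite_measure_mono) auto
    also have "\<dots> \<le> real t * (1 - p i0) ^ (m div t)" by (rule caseA[OF nn s i0(1) t1])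
    also have "\<dots> \<le> real t * exp (1 - real t)"
    proof -
      have a0: "0 \<le> p i0" using nn i0 by simp
      have a1: "p i0 \<le> 1" using s nn i0 member_le_sum[of i0 "{..<n}" p] by auto
      have "(1 - p i0) ^ (m div t) \<le> exp (- p i0) ^ (m div t)"
        using a1 exp_ge_add_one_self[of "- p i0"] by (intro power_mono) auto
      also have "\<dots> = exp (- (p i0 * real (m div t)))" by (simp add: exp_of_nat_mult[symmetric] algebra_simps)
      also have "\<dots> \<le> exp (1 - real t)"
      proof -
        have "real m / real t - 1 \<le> real (m div t)"
        proof -
          have "real m = real (m div t) * real t + real (m mod t)"
            by (metis of_nat_add of_nat_mult mult_div_mod_eq mult.commute)
          moreover have "real (m mod t) \<le> real t" using t1 by simp
          ultimately show ?thesis using t1 by (simp add: field_simps)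
        qed
        hence "p i0 * (real m / real t - 1) \<le> p i0 * real (m div t)" using a0 by (intro mult_left_mono) auto
        moreover have "real t - 1 \<le> p i0 * (real m / real t - 1)"
        proof -
          have "real t ^ 2 / real m \<le> p i0" using i0(2) m0 by (simp add: field_simps)
          have "real t ^ 2 / real m * (real m / real t - 1) = real t - real t ^ 2 / real m"
            using m0 t1 by (simp add: field_simps power2_eq_square)
          moreover have "real t ^ 2 / real m \<le> 1" using tm m0 by (simp add: power2_eq_square field_simps)
            (metis of_nat_le_iff of_nat_mult)
          moreover have "real m / real t - 1 \<ge> 0" using tm' t1 by (simp add: field_simps)
          ultimately show ?thesis using \<open>real t ^ 2 / real m \<le> p i0\<close>
            by (smt (verit) mult_right_mono)
        qed
        ultimately show ?thesis by simp
      qed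
      finally show ?thesis by (intro mult_left_mono) auto
    qed
    finally show ?thesis using b2 by linarith
  next
    case False
    hence small: "\<And>i. i < n \<Longrightarrow> real m * p i \<le> real t ^ 2" by (meson not_less)
    have th: "1 \<le> real t ^ 2" using t1 by simp
    have "{f. \<not> t \<le> max_load m n f} \<subseteq>
       {f. \<forall>a\<in>{T\<in>Pow {..<m}. card T = t} \<times> {..<n}. f \<notin> (case a of (T, i) \<Rightarrow> {f. \<forall>b\<in>T. f b \<in> {i}})}"
    proof (intro subsetI CollectI ballI notI)
      fix f a assume f: "f \<in> {f. \<not> t \<le> max_load m n f}" and a: "a \<in> {T\<in>Pow {..<m}. card T = t} \<times> {..<n}"
        and fa: "f \<in> (case a of (T, i) \<Rightarrow> {f. \<forall>b\<in>T. f b \<in> {i}})"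
      obtain T i where ai: "a = (T, i)" by (cases a) auto
      have T: "T \<subseteq> {..<m}" "card T = t" "i < n" using a ai by auto
      have "T \<subseteq> {j\<in>{..<m}. f j = i}" using fa T ai by auto
      hence "card T \<le> card {j\<in>{..<m}. f j = i}" by (intro card_mono) auto
      thus False using f T card_le_max_load[OF T(3), of m f] by simp
    qed
    hence "measure_pmf.prob (throws m n p) {f. \<not> t \<le> max_load m n f}
       \<le> measure_pmf.prob (throws m n p) {f. \<forall>a\<in>{T\<in>Pow {..<m}. card T = t} \<times> {..<n}. f \<notin> (case a of (T, i) \<Rightarrow> {f. \<forall>b\<in>T. f b \<in> {i}})}"
      by (intro measure_pmf.finite_measure_mono) auto
    also have "\<dots> \<le> 2 ^ t * real t * (real t ^ 2) ^ t / (real (m choose t) * (\<Sum>i<n. p i ^ t))"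
      by (rule caseB[OF nn s t1 tm' small th])
    also have "\<dots> \<le> real t * (2 * real t ^ 3 * real n / real m) ^ t / real n"
    proof -
      define S where "S = (\<Sum>i<n. p i ^ t)"
      have S1: "1 / real n ^ (t - 1) \<le> S" using pm[OF nn s t1] n0 unfolding S_def
        by (simp add: field_simps)
      have C1: "(real m / real t) ^ t \<le> real (m choose t)" by (rule binomial_ge_n_over_k_pow_k[OF tm'])
      have pos: "0 < (real m / real t) ^ t * (1 / real n ^ (t - 1))" using m0 t1 n0 by simp
      have Cle: "(real m / real t) ^ t * (1 / real n ^ (t - 1)) \<le> real (m choose t) * S"
        using C1 S1 pos by (intro mult_mono) auto
      have CSpos: "0 < real (m choose t) * S" using Cle pos by linarith
      have "2 ^ t * real t * (real t ^ 2) ^ t / (real (m choose t) * S)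
          \<le> 2 ^ t * real t * (real t ^ 2) ^ t / ((real m / real t) ^ t * (1 / real n ^ (t - 1)))"
        by (rule divide_left_mono[OF Cle _ mult_pos_pos[OF CSpos pos]]) simp
      also have "\<dots> = real t * (2 * real t ^ 3 * real n / real m) ^ t / real n"
      proof -
        have "real n ^ t = real n * real n ^ (t - 1)" using t1 by (metis power_eq_if not_one_le_zero)
        thus ?thesis using m0 n0 t1
          by (simp add: field_simps power_mult_distrib power_mult[symmetric] power_divide)
            (simp add: power_mult_distrib[symmetric] power_add[symmetric] mult.commute numeral_eq_Suc)
      qed
      finally show ?thesis unfolding S_def .
    qed
    finally show ?thesis using b1 by linarith
  qed
qed



lemma asym_ev:
  fixes C :: real and k :: nat and A B D :: real
  shows "eventually (\<lambda>x::real. 3 \<le> ln x \<and> 1 \<le> ln (ln x) \<and> (real k + 2) * ln (ln x) - ln C \<le> ln x \<and>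
     \<bar>B\<bar> \<le> ln (ln x) \<and> A * ln x / ln (ln x) + B + D * ln (ln x) \<le> ln x / 4 \<and> 1 \<le> x) at_top"
  by (intro eventually_conj; real_asymp)



lemma asym_point:
  fixes x C mm :: real and k t :: nat
  assumes C: "C > 0" and c: "c = 1 / (2 * (real k + 3))"
    and h0: "3 \<le> ln x" and h1: "1 \<le> ln (ln x)" and h2: "(real k + 2) * ln (ln x) - ln C \<le> ln x"
    and h3: "\<bar>ln 2 - ln C\<bar> \<le> ln (ln x)"
    and h4: "c * (ln 2 - ln C) * ln x / ln (ln x) + (ln 2 - ln C) + (real k + 4) * ln (ln x) \<le> ln x / 4"
    and h5: "1 \<le> x"
    and ht1: "c * ln x / ln (ln x) \<le> real t" and ht2: "real t \<le> c * ln x / ln (ln x) + 1"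
    and hm: "C * x / ln x ^ k \<le> mm"
  shows "1 \<le> t \<and> real t * real t \<le> mm \<and> real t * (2 * real t ^ 3 * x / mm) ^ t / x \<le> exp (- ln x / 4)"
proof -
  define L where "L = ln x"
  define l where "l = ln L"
  have l1: "1 \<le> l" using h1 unfolding l_def L_def .
  have L2: "2 \<le> L" using h0 unfolding L_def by simp
  have Lpos: "0 < L" using L2 by simp
  have x0: "0 < x" using h5 by simp
  have c0: "0 < c" "c \<le> 1/6" unfolding c
    by (simp, rule frac_le) auto
  define y where "y = c * L / l"
  have y0: "0 < y" unfolding y_def using c0 Lpos l1 by simp
  have yL: "y \<le> L / 6"
  proof -
    have cL: "0 \<le> c * L" using c0 Lpos by simp
    have "c * L * 1 \<le> c * L * l" using l1 cL by (rule mult_left_mono)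
    hence "y \<le> c * L" unfolding y_def using l1 by (simp add: pos_divide_le_eq)
    also have "\<dots> \<le> L / 6" using c0 Lpos by (simp add: field_simps)
    finally show ?thesis .
  qed
  have t1: "1 \<le> t" using ht1 y0 unfolding y_def L_def l_def by (cases t) auto
  have tL: "real t \<le> L" using ht2 yL L2 unfolding y_def L_def l_def by linarith
  have t0: "0 < real t" using t1 by simp
  have Lk: "L ^ (k + 2) \<le> C * x"
  proof -
    have "L ^ (k + 2) = exp (real (k + 2) * l)" unfolding l_def using Lpos
      by (simp only: exp_of_nat_mult exp_ln)
    also have "\<dots> \<le> exp (L + ln C)" using h2 unfolding l_def L_def by (simp add: add.commute)
    also have "\<dots> = C * x" using C x0 unfolding L_def by (simp add: exp_add)
    finally show ?thesis .
  qed
  have "0 < C * x / L ^ k" using C x0 Lpos by simp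
  hence mmpos: "0 < mm" using hm unfolding L_def by linarith
  have tt: "real t * real t \<le> mm"
  proof -
    have "real t * real t \<le> L ^ 2" using tL t0 by (simp add: power2_eq_square mult_mono)
    also have "L ^ 2 \<le> C * x / L ^ k" using Lk Lpos by (simp add: field_simps power_add power2_eq_square mult.commute mult.left_commute)
    also have "\<dots> \<le> mm" using hm unfolding L_def .
    finally show ?thesis .
  qed
  define \<beta> where "\<beta> = 2 * real t ^ 3 * x / mm"
  have bpos: "0 < \<beta>" unfolding \<beta>_def using t0 x0 mmpos by simp
  define \<Lambda> where "\<Lambda> = ln 2 - ln C + (real k + 3) * l"
  have lt: "ln (real t) \<le> l" unfolding l_def using tL t0 by simp
  have lmm: "ln C + L - real k * l \<le> ln mm"
  proof -
    have "ln (C * x / L ^ k) = ln C + L - real k * l"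
      using C x0 Lpos unfolding L_def l_def by (simp add: ln_mult ln_div ln_realpow)
    moreover have "ln (C * x / L ^ k) \<le> ln mm" using hm C x0 Lpos mmpos unfolding L_def by simp
    ultimately show ?thesis by simp
  qed
  have lb: "ln \<beta> \<le> \<Lambda>"
  proof -
    have "ln \<beta> = ln 2 + 3 * ln (real t) + L - ln mm"
      unfolding \<beta>_def L_def using t0 x0 mmpos by (simp add: ln_mult ln_div ln_realpow)
    thus ?thesis unfolding \<Lambda>_def using lt lmm by (simp add: algebra_simps)
  qed
  have Lam0: "0 \<le> \<Lambda>"
  proof -
    have "1 * l \<le> (real k + 3) * l" using l1 by (intro mult_right_mono) auto
    moreover have "- l \<le> ln 2 - ln C" using h3 unfolding l_def L_def by linarith
    ultimately show ?thesis unfolding \<Lambda>_def by linarith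
  qed
  have tlb: "real t * ln \<beta> \<le> (y + 1) * \<Lambda>"
  proof -
    have "real t * ln \<beta> \<le> real t * \<Lambda>" using lb t0 by (simp add: mult_left_mono)
    also have "\<dots> \<le> (y + 1) * \<Lambda>" using ht2 Lam0 unfolding y_def L_def l_def by (simp add: mult_right_mono)
    finally show ?thesis .
  qed
  have yL2: "(y + 1) * \<Lambda> = c * (ln 2 - ln C) * L / l + L / 2 + \<Lambda>"
  proof -
    have l0: "l \<noteq> 0" using l1 by simp
    have a: "y * ((real k + 3) * l) = c * (real k + 3) * L" unfolding y_def using l0 by (simp add: field_simps)
    have b: "c * (real k + 3) = 1 / 2" unfolding c by (simp add: field_simps)
    have d: "y * ((real k + 3) * l) = L / 2" unfolding a b by simp
    have e: "y * (ln 2 - ln C) = c * (ln 2 - ln C) * L / l" unfolding y_def by simp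
    have f: "(y + 1) * \<Lambda> = y * (ln 2 - ln C) + y * ((real k + 3) * l) + \<Lambda>"
      unfolding \<Lambda>_def by (simp add: algebra_simps)
    show ?thesis unfolding f d e ..
  qed
  have F: "real t * \<beta> ^ t / x = exp (ln (real t) + real t * ln \<beta> - L)"
    using t0 bpos x0 unfolding L_def by (simp add: exp_add exp_diff exp_of_nat_mult[symmetric] ln_realpow[symmetric])
  have h4': "c * (ln 2 - ln C) * L / l + (ln 2 - ln C) + (real k + 4) * l \<le> L / 4"
    using h4 unfolding L_def l_def .
  have k4: "(real k + 4) * l = (real k + 3) * l + l" by (simp add: algebra_simps)
  define Q where "Q = c * (ln 2 - ln C) * L / l"
  have "ln (real t) + real t * ln \<beta> - L \<le> l + (y + 1) * \<Lambda> - L" using lt tlb by linarith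
  also have "\<dots> = l + Q + L / 2 + \<Lambda> - L" using yL2 unfolding Q_def by simp
  also have "\<dots> \<le> - L / 4"
  proof -
    have "Q + (ln 2 - ln C) + ((real k + 3) * l + l) \<le> L / 4" using h4' k4 unfolding Q_def by simp
    thus ?thesis unfolding \<Lambda>_def by linarith
  qed
  finally have "ln (real t) + real t * ln \<beta> - L \<le> - L / 4" .
  hence "real t * \<beta> ^ t / x \<le> exp (- L / 4)" unfolding F by simp
  thus ?thesis using t1 tt unfolding \<beta>_def L_def by simp
qed



theorem mainTheorem20:
  fixes m :: "nat \<Rightarrow> nat" and p :: "nat \<Rightarrow> nat \<Rightarrow> real"
  assumes p_nonneg: "\<forall>n i. i < n \<longrightarrow> p n i \<ge> 0"
    and p_sum: "\<forall>n>0. (\<Sum>i<n. p n i) = 1"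
    and m_large: "\<exists>C>0. \<exists>k::nat. eventually (\<lambda>n. real (m n) \<ge> C * real n / ln (real n) ^ k) at_top"
  shows "\<exists>c>0. (\<lambda>n. measure_pmf.prob (throws (m n) n (p n))
            {f. real (max_load (m n) n f) \<ge> c * ln (real n) / ln (ln (real n))}) \<longlonglongrightarrow> 1"
proof -
  obtain C k where C: "C > 0" and evm: "eventually (\<lambda>n. real (m n) \<ge> C * real n / ln (real n) ^ k) at_top"
    using m_large by auto
  define c where "c = 1 / (2 * (real k + 3))"
  have c0: "c > 0" unfolding c_def by simp
  define y where "y n = c * ln (real n) / ln (ln (real n))" for n :: nat
  define tt where "tt n = nat \<lceil>y n\<rceil>" for n
  define G where "G n = real (tt n) * exp (1 - real (tt n)) + exp (- ln (real n) / 4)" for n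
  define P where "P n = measure_pmf.prob (throws (m n) n (p n))
            {f. real (max_load (m n) n f) \<ge> c * ln (real n) / ln (ln (real n))}" for n
  have ev1: "eventually (\<lambda>x::real. 3 \<le> ln x \<and> 1 \<le> ln (ln x) \<and> (real k + 2) * ln (ln x) - ln C \<le> ln x \<and>
     \<bar>ln 2 - ln C\<bar> \<le> ln (ln x) \<and> c * (ln 2 - ln C) * ln x / ln (ln x) + (ln 2 - ln C) + (real k + 4) * ln (ln x) \<le> ln x / 4 \<and> 1 \<le> x) at_top"
    by (rule asym_ev)
  have ev2: "eventually (\<lambda>n. 3 \<le> ln (real n) \<and> 1 \<le> ln (ln (real n)) \<and> (real k + 2) * ln (ln (real n)) - ln C \<le> ln (real n) \<and>
     \<bar>ln 2 - ln C\<bar> \<le> ln (ln (real n)) \<and> c * (ln 2 - ln C) * ln (real n) / ln (ln (real n)) + (ln 2 - ln C) + (real k + 4) * ln (ln (real n)) \<le> ln (real n) / 4 \<and> 1 \<le> real n) sequentially"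
    by (rule eventually_compose_filterlim[OF ev1 filterlim_real_sequentially])
  have key: "eventually (\<lambda>n. 1 - G n \<le> P n) sequentially"
    using ev2 evm
  proof eventually_elim
    case (elim n)
    have y0: "0 \<le> y n" unfolding y_def using elim c0 by simp
    have yt1: "y n \<le> real (tt n)" unfolding tt_def by linarith
    have yt2: "real (tt n) \<le> y n + 1" unfolding tt_def using y0 by linarith
    have A: "1 \<le> tt n \<and> real (tt n) * real (tt n) \<le> real (m n) \<and>
       real (tt n) * (2 * real (tt n) ^ 3 * real n / real (m n)) ^ tt n / real n \<le> exp (- ln (real n) / 4)"
      by (rule asym_point[OF C c_def]) (use elim yt1 yt2 in \<open>auto simp: y_def\<close>)
    have n0: "n > 0" using elim by simp
    have nn: "\<And>i. i < n \<Longrightarrow> p n i \<ge> 0" using p_nonneg by auto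
    have s: "(\<Sum>i<n. p n i) = 1" using p_sum n0 by auto
    have tm: "tt n * tt n \<le> m n" using A by (metis of_nat_le_iff of_nat_mult)
    have PN: "measure_pmf.prob (throws (m n) n (p n)) {f. \<not> tt n \<le> max_load (m n) n f} \<le> G n"
      using per_n[OF nn s _ tm] A unfolding G_def by linarith
    have "{f. tt n \<le> max_load (m n) n f} \<subseteq> {f. real (max_load (m n) n f) \<ge> c * ln (real n) / ln (ln (real n))}"
      using yt1 unfolding y_def by (auto intro: order_trans)
    hence "measure_pmf.prob (throws (m n) n (p n)) {f. tt n \<le> max_load (m n) n f} \<le> P n"
      unfolding P_def by (intro measure_pmf.finite_measure_mono) auto
    moreover have "measure_pmf.prob (throws (m n) n (p n)) {f. tt n \<le> max_load (m n) n f}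
       = 1 - measure_pmf.prob (throws (m n) n (p n)) {f. \<not> tt n \<le> max_load (m n) n f}"
    proof -
      have "{f. tt n \<le> max_load (m n) n f} = UNIV - {f. \<not> tt n \<le> max_load (m n) n f}" by auto
      thus ?thesis using measure_pmf.prob_compl[of "{f. \<not> tt n \<le> max_load (m n) n f}" "throws (m n) n (p n)"]
        by simp
    qed
    ultimately show ?case using PN by linarith
  qed
  have up: "eventually (\<lambda>n. P n \<le> 1) sequentially" unfolding P_def by simp
  have ylim: "filterlim y at_top sequentially"
  proof -
    have "filterlim (\<lambda>n::nat. ln (real n) / ln (ln (real n))) at_top sequentially" by real_asymp
    hence "filterlim (\<lambda>n::nat. c * (ln (real n) / ln (ln (real n)))) at_top sequentially"
      using c0 by (intro filterlim_tendsto_pos_mult_at_top[OF tendsto_const]) auto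
    thus ?thesis unfolding y_def by simp
  qed
  have tlim: "filterlim (\<lambda>n. real (tt n)) at_top sequentially"
  proof (rule filterlim_at_top_mono[OF ylim])
    show "\<forall>\<^sub>F n in sequentially. y n \<le> real (tt n)"
      by (intro always_eventually allI) (simp add: tt_def; linarith)
  qed
  have g: "((\<lambda>s::real. s * exp (1 - s)) \<longlongrightarrow> 0) at_top" by real_asymp
  have G1: "(\<lambda>n. real (tt n) * exp (1 - real (tt n))) \<longlonglongrightarrow> 0"
    using filterlim_compose[OF g tlim] by simp
  have G2: "(\<lambda>n::nat. exp (- ln (real n) / 4)) \<longlonglongrightarrow> 0" by real_asymp
  have "(\<lambda>n. 1 - G n) \<longlonglongrightarrow> 1 - (0 + 0)" unfolding G_def by (intro tendsto_intros G1 G2)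
  hence low: "(\<lambda>n. 1 - G n) \<longlonglongrightarrow> 1" by simp
  have "P \<longlonglongrightarrow> 1" by (rule tendsto_sandwich[OF key up low tendsto_const])
  thus ?thesis using c0 unfolding P_def by blast
qed

end
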